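(* Under the standing setting and assumptions (A1)–(A3) described in the context, assume $\mathcal A$ is strictly convex and $\mathcal R(X)\neq\emptyset$ for all $X\in\mathcal X$. Then $|\mathcal R(X)|=1$ for all $X\in\mathcal X$.
   Context: Let $\mathcal X$ be a Hausdorff, first countable, locally convex topological vector space over $\mathbb R$, partially ordered by a partial order $\geq$ with positive cone $\mathcal X_+=\{X\in\mathcal X: X\geq 0\}$. Let $\mathcal M\subset\mathcal X$ be a vector subspace with $1<\dim\mathcal M<\infty$, carrying the relative topology, and let $\pi:\mathcal M\to\mathbb R$ be linear. Standing assumptions: (A1) there is $U\in\mathcal M\cap\mathcal X_+$ with $\pi(U)=1$; (A2) $\mathcal A\subsetneq\mathcal X$ is closed, contains $0$, and satisfies $\mathcal A+\mathcal X_+\subset\mathcal A$; (A3) the map $\rho(X)=\inf\{\pi(Z): Z\in\mathcal M,\ X+Z\in\mathcal A\}$ is finitely valued and continuous on $\mathcal X$. The optimal payoff map is $\mathcal R(X)=\{Z\in\mathcal M: X+Z\in\mathcal A,\ \pi(Z)=\rho(X)\}$; $|\cdot|$ is cardinality. $\mathcal A$ is strictly convex if $\lambda X+(1-\lambda)Y\in\mathrm{int}\,\mathcal A$ for all $\lambda\in(0,1)$ and all distinct $X,Y\in\mathcal A$. *)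

theory Defs
  imports "HOL-Analysis.Analysis"
begin

definition tvs :: "'a::{real_vector,topological_space} itself \<Rightarrow> bool" where
  "tvs _ \<longleftrightarrow> continuous_on UNIV (\<lambda>p::'a \<times> 'a. fst p + snd p)
             \<and> continuous_on UNIV (\<lambda>p::real \<times> 'a. fst p *\<^sub>R snd p)"

definition locally_convex :: "'a::{real_vector,topological_space} itself \<Rightarrow> bool" where
  "locally_convex _ \<longleftrightarrow> (\<forall>N::'a set. open N \<and> 0 \<in> N \<longrightarrow>
       (\<exists>C. open C \<and> convex C \<and> 0 \<in> C \<and> C \<subseteq> N))"

definition ordered_vs :: "('a::real_vector \<Rightarrow> 'a \<Rightarrow> bool) \<Rightarrow> bool" where
  "ordered_vs ge \<longleftrightarrow> (\<forall>x. ge x x) \<and> (\<forall>x y. ge x y \<and> ge y x \<longrightarrow> x = y)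
     \<and> (\<forall>x y z. ge x y \<and> ge y z \<longrightarrow> ge x z)
     \<and> (\<forall>x y z. ge x y \<longrightarrow> ge (x + z) (y + z))
     \<and> (\<forall>x y (c::real). ge x y \<and> c \<ge> 0 \<longrightarrow> ge (c *\<^sub>R x) (c *\<^sub>R y))"

definition pos_cone :: "('a::real_vector \<Rightarrow> 'a \<Rightarrow> bool) \<Rightarrow> 'a set" where
  "pos_cone ge = {X. ge X 0}"

definition fin_dim_gt1 :: "'a::real_vector set \<Rightarrow> bool" where
  "fin_dim_gt1 M \<longleftrightarrow> subspace M \<and>
     (\<exists>B. finite B \<and> independent B \<and> span B = M \<and> card B > 1)"

definition linear_on :: "'a::real_vector set \<Rightarrow> ('a \<Rightarrow> real) \<Rightarrow> bool" where
  "linear_on M \<pi> \<longleftrightarrow> (\<forall>x\<in>M. \<forall>y\<in>M. \<pi> (x + y) = \<pi> x + \<pi> y)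
                     \<and> (\<forall>x\<in>M. \<forall>c. \<pi> (c *\<^sub>R x) = c * \<pi> x)"

definition rho :: "'a::real_vector set \<Rightarrow> ('a \<Rightarrow> real) \<Rightarrow> 'a set \<Rightarrow> 'a \<Rightarrow> real" where
  "rho M \<pi> A X = Inf {\<pi> Z | Z. Z \<in> M \<and> X + Z \<in> A}"

definition rho_finite :: "'a::real_vector set \<Rightarrow> ('a \<Rightarrow> real) \<Rightarrow> 'a set \<Rightarrow> bool" where
  "rho_finite M \<pi> A \<longleftrightarrow> (\<forall>X. {\<pi> Z | Z. Z \<in> M \<and> X + Z \<in> A} \<noteq> {}
                            \<and> bdd_below {\<pi> Z | Z. Z \<in> M \<and> X + Z \<in> A})"

definition optR :: "'a::real_vector set \<Rightarrow> ('a \<Rightarrow> real) \<Rightarrow> 'a set \<Rightarrow> 'a \<Rightarrow> 'a set" where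
  "optR M \<pi> A X = {Z \<in> M. X + Z \<in> A \<and> \<pi> Z = rho M \<pi> A X}"

definition strictly_convex_set :: "'a::{real_vector,topological_space} set \<Rightarrow> bool" where
  "strictly_convex_set A \<longleftrightarrow> (\<forall>X\<in>A. \<forall>Y\<in>A. X \<noteq> Y \<longrightarrow>
      (\<forall>l::real. 0 < l \<and> l < 1 \<longrightarrow> l *\<^sub>R X + (1 - l) *\<^sub>R Y \<in> interior A))"

end

theory Submission
  imports Defs
begin

lemma line_cont:
  assumes tvs: "tvs TYPE('a::{real_vector,topological_space})"
  shows "continuous_on UNIV (\<lambda>t::real. (P::'a) + (-t) *\<^sub>R U)"
proof -
  have m: "continuous_on UNIV (\<lambda>p::real \<times> 'a. fst p *\<^sub>R snd p)"
   and a: "continuous_on UNIV (\<lambda>p::'a \<times> 'a. fst p + snd p)"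
    using tvs unfolding tvs_def by auto
  have c1: "continuous_on UNIV (\<lambda>t::real. (-t, U))"
    by (intro continuous_on_Pair continuous_on_minus continuous_on_id continuous_on_const)
  have h: "continuous_on UNIV (\<lambda>t::real. (-t) *\<^sub>R U)"
    using continuous_on_compose[OF c1 continuous_on_subset[OF m]] by (simp add: o_def)
  have c2: "continuous_on UNIV (\<lambda>t::real. (P, (-t) *\<^sub>R U))"
    by (intro continuous_on_Pair continuous_on_const h)
  show ?thesis
    using continuous_on_compose[OF c2 continuous_on_subset[OF a]] by (simp add: o_def)
qed

theorem mainTheorem14:
  fixes ge :: "'a::{real_vector,t2_space,first_countable_topology} \<Rightarrow> 'a \<Rightarrow> bool"
    and M :: "'a set" and \<pi> :: "'a \<Rightarrow> real" and A :: "'a set"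
  assumes tvs: "tvs TYPE('a)"
    and lc: "locally_convex TYPE('a)"
    and ord: "ordered_vs ge"
    and M: "fin_dim_gt1 M"
    and pi_lin: "linear_on M \<pi>"
    and A1: "\<exists>U\<in>M \<inter> pos_cone ge. \<pi> U = 1"
    and A2: "closed A" "A \<noteq> UNIV" "0 \<in> A" "\<forall>X\<in>A. \<forall>P\<in>pos_cone ge. X + P \<in> A"
    and A3: "rho_finite M \<pi> A" "continuous_on UNIV (rho M \<pi> A)"
    and sc: "strictly_convex_set A"
    and ne: "\<forall>X. optR M \<pi> A X \<noteq> {}"
  shows "\<forall>X. card (optR M \<pi> A X) = 1"
proof
  fix X
  obtain U where U: "U \<in> M" "\<pi> U = 1" using A1 by auto
  have sub: "subspace M" using M unfolding fin_dim_gt1_def by auto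
  have uniq: "Z1 = Z2" if z1: "Z1 \<in> optR M \<pi> A X" and z2: "Z2 \<in> optR M \<pi> A X" for Z1 Z2
  proof (rule ccontr)
    assume neq: "Z1 \<noteq> Z2"
    let ?r = "rho M \<pi> A X"
    have Z1: "Z1 \<in> M" "X + Z1 \<in> A" "\<pi> Z1 = ?r" and Z2: "Z2 \<in> M" "X + Z2 \<in> A" "\<pi> Z2 = ?r"
      using z1 z2 unfolding optR_def by auto
    define Z where "Z = (1/2::real) *\<^sub>R Z1 + (1/2::real) *\<^sub>R Z2"
    have ZM: "Z \<in> M" unfolding Z_def using sub Z1 Z2 by (simp add: subspace_add subspace_scale)
    have s1: "(1/2::real) *\<^sub>R Z1 \<in> M" "(1/2::real) *\<^sub>R Z2 \<in> M" using sub Z1 Z2 by (simp_all add: subspace_scale)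
    have piZ: "\<pi> Z = ?r" unfolding Z_def using pi_lin s1 Z1 Z2 unfolding linear_on_def by simp
    have "(1/2::real) *\<^sub>R (X + Z1) + (1 - 1/2) *\<^sub>R (X + Z2) \<in> interior A"
    proof -
      have "X + Z1 \<noteq> X + Z2" using neq by simp
      moreover have "(0::real) < 1/2 \<and> (1/2::real) < 1" by simp
      ultimately show ?thesis using sc Z1(2) Z2(2) unfolding strictly_convex_set_def by blast
    qed
    moreover have "(1/2::real) *\<^sub>R (X + Z1) + (1 - 1/2) *\<^sub>R (X + Z2) = X + Z"
      unfolding Z_def by (simp add: algebra_simps flip: scaleR_add_left)
    ultimately have int: "X + Z \<in> interior A" by simp
    have op: "open (UNIV \<inter> (\<lambda>t::real. (X + Z) + (-t) *\<^sub>R U) -` interior A)"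
      using continuous_on_open_vimage[THEN iffD1, rule_format, OF open_UNIV line_cont[OF tvs], of "interior A" "X + Z" U]
      by (simp add: Int_commute)
    moreover have "(0::real) \<in> UNIV \<inter> (\<lambda>t::real. (X + Z) + (-t) *\<^sub>R U) -` interior A"
      using int by simp
    ultimately obtain e where e: "e > 0" "ball 0 e \<subseteq> UNIV \<inter> (\<lambda>t::real. (X + Z) + (-t) *\<^sub>R U) -` interior A"
      using open_contains_ball by blast
    have "e/2 \<in> ball 0 e" using e by simp
    hence "(X + Z) + (-(e/2)) *\<^sub>R U \<in> interior A" using e by blast
    hence inA: "X + (Z + (-(e/2)) *\<^sub>R U) \<in> A" using interior_subset by (auto simp: algebra_simps)
    have WM: "Z + (-(e/2)) *\<^sub>R U \<in> M" using sub ZM U by (simp add: subspace_diff subspace_scale)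
    have sM: "(-(e/2)) *\<^sub>R U \<in> M" using sub U by (simp add: subspace_scale subspace_neg)
    have piW: "\<pi> (Z + (-(e/2)) *\<^sub>R U) = ?r - e/2"
    proof -
      have "\<pi> (Z + (-(e/2)) *\<^sub>R U) = \<pi> Z + \<pi> ((-(e/2)) *\<^sub>R U)"
        using pi_lin ZM sM unfolding linear_on_def by blast
      also have "\<pi> ((-(e/2)) *\<^sub>R U) = (-(e/2)) * \<pi> U"
        using pi_lin U unfolding linear_on_def by blast
      finally show ?thesis using U piZ by simp
    qed
    have bdd: "bdd_below {\<pi> Z | Z. Z \<in> M \<and> X + Z \<in> A}" using A3(1) unfolding rho_finite_def by auto
    have "?r \<le> \<pi> (Z + (-(e/2)) *\<^sub>R U)"
      unfolding rho_def by (rule cInf_lower) (use WM inA bdd in auto)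
    with piW e show False by simp
  qed
  obtain Z where "Z \<in> optR M \<pi> A X" using ne by auto
  hence "optR M \<pi> A X = {Z}" using uniq by blast
  thus "card (optR M \<pi> A X) = 1" by simp
qed

end
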